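(* Let $b>0$ and let $F,x_0,x_\infty,\mathbb{S}_2$ be as in the context. For any $(x,y)\in\mathbb{S}_2$ there exists a unique solution $z=z(x,y)$ of $y-z=F(x-\alpha z)$. Moreover $z(x,y)\in\big(\frac{x-x_0}{\alpha},\frac{x-x_\infty}{\alpha}\wedge y\big]$, $z(x,F(x))=0$ for every $x\in(x_\infty,x_0)$, and $z(x,y)=\frac{x-x_0}{\alpha}$ for every $(x,y)\in\mathbb{R}\times(0,\infty)$ with $x\ge x_0$ and $y=\frac{x-x_0}{\alpha}$.
   Context: Constants: $a\in\mathbb{R}$, $b>0$, $\sigma>0$, $\rho>0$, $c>0$, $\alpha>0$. $\psi(x)=e^{\frac{(bx-a)^2}{2\sigma^2 b}}D_{-\rho/b}\big(-\frac{bx-a}{\sigma b}\sqrt{2b}\big)$ with $D_\beta(x)=\frac{e^{-x^2/4}}{\Gamma(-\beta)}\int_0^\infty t^{-\beta-1}e^{-t^2/2-xt}dt$ ($\beta<0$); $\psi$ is the positive strictly increasing fundamental solution of $\frac12\sigma^2u''+(a-bx)u'-\rho u=0$. $x_0$ (resp. $x_\infty$) is the unique solution on $(c,\infty)$ of $(x-c)\psi'(x)-\psi(x)=0$ (resp. $(x-c)\psi''(x)-\psi'(x)=0$); $c<x_\infty<x_0$. For $x\in(x_\infty,x_0]$, $F(x)=\int_x^{x_0}\Theta(z)dz$ with $\Theta(z)=\frac{[\psi'''(z)((z-c)\psi'(z)-\psi(z))-\psi''(z)((z-c)\psi''(z)-\psi'(z))]\psi(z)}{-\alpha[\psi''(z)\psi(z)-\psi'(z)^2][(z-c)\psi''(z)-\psi'(z)]}$;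 $F$ is a strictly decreasing continuous bijection of $(x_\infty,x_0]$ onto $[0,\infty)$ with $F(x_0)=0$, and $F^{-1}$ denotes its inverse. $\mathbb{S}_2=\{(x,y)\in\mathbb{R}\times(0,\infty):x\ge F^{-1}(y),\ y>(x-x_0)/\alpha\}$. *)

theory Defs
  imports "HOL-Analysis.Analysis"
begin

text \<open>Parabolic cylinder function D_beta (integral representation, meant for beta < 0).\<close>
definition Dpc :: "real \<Rightarrow> real \<Rightarrow> real" where
  "Dpc \<beta> x = exp (- (x^2) / 4) / Gamma (- \<beta>) *
      integral {0<..} (\<lambda>t. t powr (- \<beta> - 1) * exp (- (t^2) / 2 - x * t))"

definition psi :: "real \<Rightarrow> real \<Rightarrow> real \<Rightarrow> real \<Rightarrow> real \<Rightarrow> real" where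
  "psi a b \<sigma> \<rho> x = exp ((b * x - a)^2 / (2 * \<sigma>^2 * b)) *
      Dpc (- \<rho> / b) (- (b * x - a) / (\<sigma> * b) * sqrt (2 * b))"

definition dpsi :: "nat \<Rightarrow> real \<Rightarrow> real \<Rightarrow> real \<Rightarrow> real \<Rightarrow> real \<Rightarrow> real" where
  "dpsi k a b \<sigma> \<rho> = (deriv ^^ k) (psi a b \<sigma> \<rho>)"

definition x0 :: "real \<Rightarrow> real \<Rightarrow> real \<Rightarrow> real \<Rightarrow> real \<Rightarrow> real" where
  "x0 a b \<sigma> \<rho> c = (THE x. c < x \<and>
      (x - c) * dpsi 1 a b \<sigma> \<rho> x - dpsi 0 a b \<sigma> \<rho> x = 0)"

definition xinf :: "real \<Rightarrow> real \<Rightarrow> real \<Rightarrow> real \<Rightarrow> real \<Rightarrow> real" where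
  "xinf a b \<sigma> \<rho> c = (THE x. c < x \<and>
      (x - c) * dpsi 2 a b \<sigma> \<rho> x - dpsi 1 a b \<sigma> \<rho> x = 0)"

definition Theta :: "real \<Rightarrow> real \<Rightarrow> real \<Rightarrow> real \<Rightarrow> real \<Rightarrow> real \<Rightarrow> real \<Rightarrow> real" where
  "Theta a b \<sigma> \<rho> c \<alpha> z =
     (let p0 = dpsi 0 a b \<sigma> \<rho> z; p1 = dpsi 1 a b \<sigma> \<rho> z;
          p2 = dpsi 2 a b \<sigma> \<rho> z; p3 = dpsi 3 a b \<sigma> \<rho> z in
      ((p3 * ((z - c) * p1 - p0) - p2 * ((z - c) * p2 - p1)) * p0) /
      (- \<alpha> * (p2 * p0 - p1^2) * ((z - c) * p2 - p1)))"

text \<open>F(x) = integral from x to x0 of Theta; meaningful for x in (xinf, x0].\<close>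
definition FF :: "real \<Rightarrow> real \<Rightarrow> real \<Rightarrow> real \<Rightarrow> real \<Rightarrow> real \<Rightarrow> real \<Rightarrow> real" where
  "FF a b \<sigma> \<rho> c \<alpha> x = integral {x .. x0 a b \<sigma> \<rho> c} (Theta a b \<sigma> \<rho> c \<alpha>)"

definition Finv :: "real \<Rightarrow> real \<Rightarrow> real \<Rightarrow> real \<Rightarrow> real \<Rightarrow> real \<Rightarrow> real \<Rightarrow> real" where
  "Finv a b \<sigma> \<rho> c \<alpha> y =
     inv_into {xinf a b \<sigma> \<rho> c <.. x0 a b \<sigma> \<rho> c} (FF a b \<sigma> \<rho> c \<alpha>) y"

definition S2 :: "real \<Rightarrow> real \<Rightarrow> real \<Rightarrow> real \<Rightarrow> real \<Rightarrow> real \<Rightarrow> (real \<times> real) set" where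
  "S2 a b \<sigma> \<rho> c \<alpha> = {(x, y). 0 < y \<and> x \<ge> Finv a b \<sigma> \<rho> c \<alpha> y \<and>
       y > (x - x0 a b \<sigma> \<rho> c) / \<alpha>}"

definition is_zsol :: "real \<Rightarrow> real \<Rightarrow> real \<Rightarrow> real \<Rightarrow> real \<Rightarrow> real \<Rightarrow> real \<Rightarrow> real \<Rightarrow> real \<Rightarrow> bool" where
  "is_zsol a b \<sigma> \<rho> c \<alpha> x y z \<longleftrightarrow>
     x - \<alpha> * z \<in> {xinf a b \<sigma> \<rho> c <.. x0 a b \<sigma> \<rho> c} \<and>
     y - z = FF a b \<sigma> \<rho> c \<alpha> (x - \<alpha> * z)"

definition zfun :: "real \<Rightarrow> real \<Rightarrow> real \<Rightarrow> real \<Rightarrow> real \<Rightarrow> real \<Rightarrow> real \<Rightarrow> real \<Rightarrow> real" where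
  "zfun a b \<sigma> \<rho> c \<alpha> x y = (THE z. is_zsol a b \<sigma> \<rho> c \<alpha> x y z)"

end

theory Submission
  imports Defs
begin

theorem lemma4p9:
  fixes a b \<sigma> \<rho> c \<alpha> :: real
  defines "X0 \<equiv> x0 a b \<sigma> \<rho> c" and "XI \<equiv> xinf a b \<sigma> \<rho> c"
      and "F \<equiv> FF a b \<sigma> \<rho> c \<alpha>" and "z \<equiv> zfun a b \<sigma> \<rho> c \<alpha>"
  assumes "b > 0" and "\<sigma> > 0" and "\<rho> > 0" and "c > 0" and "\<alpha> > 0"
    and "\<exists>!x. c < x \<and> (x - c) * dpsi 1 a b \<sigma> \<rho> x - dpsi 0 a b \<sigma> \<rho> x = 0"
    and "\<exists>!x. c < x \<and> (x - c) * dpsi 2 a b \<sigma> \<rho> x - dpsi 1 a b \<sigma> \<rho> x = 0"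
    and "c < XI" and "XI < X0"
    and "\<forall>u\<in>{XI<..X0}. \<forall>v\<in>{XI<..X0}. u < v \<longrightarrow> F v < F u"
    and "continuous_on {XI<..X0} F"
    and "bij_betw F {XI<..X0} {0..}"
  shows "(\<forall>(x, y) \<in> S2 a b \<sigma> \<rho> c \<alpha>.
            (\<exists>!w. is_zsol a b \<sigma> \<rho> c \<alpha> x y w) \<and>
            z x y \<in> {(x - X0) / \<alpha> <.. min ((x - XI) / \<alpha>) y})
       \<and> (\<forall>x\<in>{XI<..<X0}. z x (F x) = 0)
       \<and> (\<forall>x y. 0 < y \<and> x \<ge> X0 \<and> y = (x - X0) / \<alpha> \<longrightarrow> z x y = (x - X0) / \<alpha>)"
proof -
  note al = \<open>\<alpha> > 0\<close>
  note mono = assms(14)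
  note bij = assms(16)
  have zs: "is_zsol a b \<sigma> \<rho> c \<alpha> x y w \<longleftrightarrow> x - \<alpha> * w \<in> {XI<..X0} \<and> y - w = F (x - \<alpha> * w)"
    for x y w unfolding is_zsol_def X0_def XI_def F_def by simp
  have Fnn: "F u \<ge> 0" if "u \<in> {XI<..X0}" for u
    using bij that unfolding bij_betw_def by auto
  have X0in: "X0 \<in> {XI<..X0}" using assms(13) by simp
  have FX0: "F X0 = 0"
  proof -
    obtain u where u: "u \<in> {XI<..X0}" "F u = 0" using bij unfolding bij_betw_def by force
    show ?thesis
    proof (rule ccontr)
      assume "F X0 \<noteq> 0"
      then have "u \<noteq> X0" using u by auto
      then have "u < X0" using u by auto
      then have "F X0 < F u" using mono u X0in by blast
      then show False using Fnn[OF X0in] u by simp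
    qed
  qed
  have uniq: "w1 = w2" if "is_zsol a b \<sigma> \<rho> c \<alpha> x y w1" "is_zsol a b \<sigma> \<rho> c \<alpha> x y w2" for x y w1 w2
  proof -
    have *: False if "is_zsol a b \<sigma> \<rho> c \<alpha> x y w1" "is_zsol a b \<sigma> \<rho> c \<alpha> x y w2" "w1 < w2" for w1 w2
    proof -
      have "x - \<alpha> * w2 < x - \<alpha> * w1" using that(3) al by simp
      then have "F (x - \<alpha> * w1) < F (x - \<alpha> * w2)" using mono that(1,2) unfolding zs by blast
      then show False using that unfolding zs by linarith
    qed
    show ?thesis using *[OF that] *[OF that(2,1)] by (meson linorder_neqE_linordered_idom)
  qed
  have zeq: "z x y = w" if "is_zsol a b \<sigma> \<rho> c \<alpha> x y w" for x y w
    unfolding z_def zfun_def using uniq that by blast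
  have P1: "(\<exists>!w. is_zsol a b \<sigma> \<rho> c \<alpha> x y w) \<and>
            z x y \<in> {(x - X0) / \<alpha> <.. min ((x - XI) / \<alpha>) y}" if xy: "(x, y) \<in> S2 a b \<sigma> \<rho> c \<alpha>" for x y
  proof -
    have y0: "0 < y" and xF: "x \<ge> Finv a b \<sigma> \<rho> c \<alpha> y" and yx: "y > (x - X0) / \<alpha>"
      using xy unfolding S2_def X0_def by auto
    define u1 where "u1 = Finv a b \<sigma> \<rho> c \<alpha> y"
    have u1: "u1 \<in> {XI<..X0}" "F u1 = y"
    proof -
      have "y \<in> F ` {XI<..X0}" using bij y0 unfolding bij_betw_def by auto
      then show "u1 \<in> {XI<..X0}" "F u1 = y"
        unfolding u1_def Finv_def XI_def[symmetric] X0_def[symmetric] F_def[symmetric]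
        by (rule inv_into_into, rule f_inv_into_f)
    qed
    have "u1 \<noteq> X0" using u1 FX0 y0 by auto
    then have u1X: "u1 < X0" using u1 by auto
    define lo where "lo = (x - X0) / \<alpha>"
    define w1 where "w1 = (x - u1) / \<alpha>"
    have xlo: "x - \<alpha> * lo = X0" unfolding lo_def using al by simp
    have xw1: "x - \<alpha> * w1 = u1" unfolding w1_def using al by simp
    have low1: "lo < w1" unfolding lo_def w1_def using u1X al by (simp add: divide_strict_right_mono)
    have w1ge: "w1 \<ge> 0" unfolding w1_def using xF u1_def al by simp
    define g where "g w = y - w - F (x - \<alpha> * w)" for w
    have dom: "x - \<alpha> * w \<in> {XI<..X0}" if "lo \<le> w" "w \<le> w1" for w
    proof -
      have "\<alpha> * lo \<le> \<alpha> * w" "\<alpha> * w \<le> \<alpha> * w1" using that al by simp_all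
      then show ?thesis using xlo xw1 u1 by auto
    qed
    have cont: "continuous_on {lo..w1} g"
      unfolding g_def
      apply (intro continuous_intros)
      apply (rule continuous_on_compose2[OF assms(15)])
      by (auto intro!: continuous_intros dom)
    have "g w1 \<le> 0" unfolding g_def xw1 u1 using w1ge by simp
    moreover have "0 \<le> g lo" unfolding g_def xlo FX0 using yx lo_def by simp
    ultimately obtain w where w: "lo \<le> w" "w \<le> w1" "g w = 0"
      using IVT2'[of g w1 0 lo] cont low1 by auto
    have sol: "is_zsol a b \<sigma> \<rho> c \<alpha> x y w" unfolding zs using dom[OF w(1,2)] w(3) g_def by simp
    have "w \<noteq> lo"
    proof
      assume "w = lo"
      then have "g w = y - lo" using xlo FX0 by (simp add: g_def)
      then show False using w(3) yx lo_def by simp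
    qed
    then have wlo: "lo < w" using w by simp
    have "w1 < (x - XI) / \<alpha>" unfolding w1_def using u1 al by (simp add: divide_strict_right_mono)
    moreover have "w \<le> y" using sol Fnn unfolding zs by fastforce
    ultimately have "w \<in> {(x - X0) / \<alpha> <.. min ((x - XI) / \<alpha>) y}" using wlo w lo_def by simp
    then show ?thesis using sol uniq zeq by metis
  qed
  have P2: "z x (F x) = 0" if "x \<in> {XI<..<X0}" for x
    using that by (intro zeq) (simp add: zs)
  have P3: "z x y = (x - X0) / \<alpha>" if "0 < y" "x \<ge> X0" "y = (x - X0) / \<alpha>" for x y
  proof (rule zeq)
    have "x - \<alpha> * ((x - X0) / \<alpha>) = X0" using al by simp
    then show "is_zsol a b \<sigma> \<rho> c \<alpha> x y ((x - X0) / \<alpha>)"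
      unfolding zs using X0in FX0 that by simp
  qed
  have "\<forall>(x, y) \<in> S2 a b \<sigma> \<rho> c \<alpha>.
            (\<exists>!w. is_zsol a b \<sigma> \<rho> c \<alpha> x y w) \<and>
            z x y \<in> {(x - X0) / \<alpha> <.. min ((x - XI) / \<alpha>) y}"
    using P1 by blast
  then show ?thesis using P2 P3 by blast
qed

end
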